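(* Let $U$ be an $N^2\times N^2$ complex matrix, with entries $U_{(i,j),(k,l)}$ indexed by pairs $i,j,k,l\in\{1,\dots,N\}$. Then $U$ is multiunitary if and only if the state $|\psi_U\rangle=\frac1N\sum_{i,j,k,l}U_{(i,j),(k,l)}|i\rangle|j\rangle|k\rangle|l\rangle$ is an AME(4,$N$) state, equivalently if and only if the array $|\psi_{ij}\rangle=\sum_{k,l}U_{(i,j),(k,l)}|k\rangle|l\rangle$ is a pair of orthogonal quantum Latin squares of size $N$. In particular every multiunitary matrix of size $N^2$ defines a pair of OQLS of size $N$, and every pair of OQLS $\{|\psi_{ij}\rangle\}$ defines the multiunitary matrix $U_{(i,j),(k,l)}=\langle k|\langle l|\psi_{ij}\rangle$.
   Context: For an $N^2\times N^2$ matrix $M$ with entries $M_{(i,j),(k,l)}$, its reshuffling is $M^R_{(i,j),(k,l)}=M_{(i,k),(j,l)}$ and its partial transpose is $M^\Gamma_{(i,j),(k,l)}=M_{(i,l),(k,j)}$. $U$ is multiunitary if $U$, $U^R$ and $U^\Gamma$ are all unitary. A pure state in $(\mathbb{C}^N)^{\otimes4}$ is AME(4,$N$) if its reduced density matrix on every pair of the four parties equals $\mathbb{I}_{N^2}/N^2$. An $N\times N$ array $\{|\psi_{ij}\rangle\}$ of vectors in $\mathbb{C}^N\otimes\mathbb{C}^N$ is a pair of orthogonal quantum Latin squares if: (1) it is an orthonormal basis of $\mathbb{C}^N\otimes\mathbb{C}^N$; (2) for each tensor factor $X$ and all $j,k$, $\mathrm{Tr}_X\sum_i|\psi_{ji}\rangle\langle\psi_{ki}|=\delta_{jk}\mathbb{I}_N$;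 (3) for each tensor factor $X$ and all $j,k$, $\mathrm{Tr}_X\sum_i|\psi_{ij}\rangle\langle\psi_{ik}|=\delta_{jk}\mathbb{I}_N$. *)

theory Defs
  imports Complex_Main "HOL-Library.Cardinality"
begin

text \<open>Computational basis of \<open>C^N\<close> is indexed by a finite type \<open>'n\<close>, \<open>N = CARD('n)\<close>.\<close>

type_synonym 'n mat2 = "'n \<times> 'n \<Rightarrow> 'n \<times> 'n \<Rightarrow> complex"
type_synonym 'n vec2 = "'n \<times> 'n \<Rightarrow> complex"
type_synonym 'n state4 = "'n \<times> 'n \<times> 'n \<times> 'n \<Rightarrow> complex"

definition unitary2 :: "('n::finite) mat2 \<Rightarrow> bool" where
  "unitary2 M \<longleftrightarrow>
     (\<forall>a b. (\<Sum>m\<in>UNIV. M a m * cnj (M b m)) = (if a = b then 1 else 0)) \<and>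
     (\<forall>a b. (\<Sum>m\<in>UNIV. cnj (M m a) * M m b) = (if a = b then 1 else 0))"

definition reshuffle :: "'n mat2 \<Rightarrow> 'n mat2" where
  "reshuffle M = (\<lambda>(i, j) (k, l). M (i, k) (j, l))"

definition partial_transpose :: "'n mat2 \<Rightarrow> 'n mat2" where
  "partial_transpose M = (\<lambda>(i, j) (k, l). M (i, l) (k, j))"

definition multiunitary :: "('n::finite) mat2 \<Rightarrow> bool" where
  "multiunitary U \<longleftrightarrow> unitary2 U \<and> unitary2 (reshuffle U) \<and> unitary2 (partial_transpose U)"

text \<open>Basis vector of the four-party space with party \<open>p\<close> in state \<open>a\<close>, \<open>q\<close> in \<open>b\<close>,
  \<open>r\<close> in \<open>c\<close> and the remaining party in \<open>d\<close> (parties numbered 0..3).\<close>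
definition fill4 :: "nat \<Rightarrow> nat \<Rightarrow> nat \<Rightarrow> 'n \<Rightarrow> 'n \<Rightarrow> 'n \<Rightarrow> 'n \<Rightarrow> 'n \<times> 'n \<times> 'n \<times> 'n" where
  "fill4 p q r a b c d =
     (let f = (\<lambda>t::nat. if t = p then a else if t = q then b else if t = r then c else d)
      in (f 0, f 1, f 2, f 3))"

text \<open>Matrix entry \<open>\<rho>_{(a,b),(a',b')}\<close> of the reduced density matrix of \<open>|\<psi>\<rangle>\<langle>\<psi>|\<close> on parties
  \<open>p,q\<close>, tracing out the complementary parties \<open>r,s\<close>.\<close>
definition reduced_pair :: "('n::finite) state4 \<Rightarrow> nat \<Rightarrow> nat \<Rightarrow> nat \<Rightarrow> 'n \<Rightarrow> 'n \<Rightarrow> 'n \<Rightarrow> 'n \<Rightarrow> complex" where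
  "reduced_pair \<psi> p q r a b a2 b2 =
     (\<Sum>c\<in>UNIV. \<Sum>d\<in>UNIV. \<psi> (fill4 p q r a b c d) * cnj (\<psi> (fill4 p q r a2 b2 c d)))"

definition AME4 :: "('n::finite) state4 \<Rightarrow> bool" where
  "AME4 (\<psi> :: 'n state4) \<longleftrightarrow>
     (\<forall>p q r s. {p, q, r, s} = {0, 1, 2, 3::nat} \<and> p < q \<and> r < s \<longrightarrow>
        (\<forall>a b a2 b2. reduced_pair \<psi> p q r a b a2 b2 =
             (if a = a2 \<and> b = b2 then 1 / (of_nat CARD('n))^2 else 0)))"

definition inner2 :: "('n::finite) vec2 \<Rightarrow> 'n vec2 \<Rightarrow> complex" where
  "inner2 v w = (\<Sum>x\<in>UNIV. cnj (v x) * w x)"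

text \<open>Partial traces of the operator \<open>\<Sum>_m |v m\<rangle>\<langle>w m|\<close> over the first / second factor,
  giving \<open>N \<times> N\<close> matrices.\<close>
definition ptrace1 :: "('m \<Rightarrow> ('n::finite) vec2) \<Rightarrow> ('m \<Rightarrow> 'n vec2) \<Rightarrow> 'm set \<Rightarrow> 'n \<Rightarrow> 'n \<Rightarrow> complex" where
  "ptrace1 v w I y y' = (\<Sum>m\<in>I. \<Sum>x\<in>UNIV. v m (x, y) * cnj (w m (x, y')))"

definition ptrace2 :: "('m \<Rightarrow> ('n::finite) vec2) \<Rightarrow> ('m \<Rightarrow> 'n vec2) \<Rightarrow> 'm set \<Rightarrow> 'n \<Rightarrow> 'n \<Rightarrow> complex" where
  "ptrace2 v w I x x' = (\<Sum>m\<in>I. \<Sum>y\<in>UNIV. v m (x, y) * cnj (w m (x', y)))"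

definition OQLS :: "('n::finite \<Rightarrow> 'n \<Rightarrow> 'n vec2) \<Rightarrow> bool" where
  "OQLS \<psi> \<longleftrightarrow>
     \<comment> \<open>(1) orthonormal basis of \<open>C^N \<otimes> C^N\<close>\<close>
     (\<forall>i j i' j'. inner2 (\<psi> i j) (\<psi> i' j') = (if i = i' \<and> j = j' then 1 else 0)) \<and>
     (\<forall>v. \<exists>c. v = (\<lambda>x. \<Sum>i\<in>UNIV. \<Sum>j\<in>UNIV. c i j * \<psi> i j x)) \<and>
     \<comment> \<open>(2) rows\<close>
     (\<forall>j k. (\<forall>y y'. ptrace1 (\<psi> j) (\<psi> k) UNIV y y' = (if j = k \<and> y = y' then 1 else 0)) \<and>
            (\<forall>x x'. ptrace2 (\<psi> j) (\<psi> k) UNIV x x' = (if j = k \<and> x = x' then 1 else 0))) \<and>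
     \<comment> \<open>(3) columns\<close>
     (\<forall>j k. (\<forall>y y'. ptrace1 (\<lambda>i. \<psi> i j) (\<lambda>i. \<psi> i k) UNIV y y' = (if j = k \<and> y = y' then 1 else 0)) \<and>
            (\<forall>x x'. ptrace2 (\<lambda>i. \<psi> i j) (\<lambda>i. \<psi> i k) UNIV x x' = (if j = k \<and> x = x' then 1 else 0)))"

definition state_of :: "('n::finite) mat2 \<Rightarrow> 'n state4" where
  "state_of (U :: 'n mat2) = (\<lambda>(i, j, k, l). U (i, j) (k, l) / of_nat CARD('n))"

definition array_of :: "'n mat2 \<Rightarrow> ('n \<Rightarrow> 'n \<Rightarrow> 'n vec2)" where
  "array_of U = (\<lambda>i j (k, l). U (i, j) (k, l))"

definition mat_of_array :: "('n \<Rightarrow> 'n \<Rightarrow> 'n vec2) \<Rightarrow> 'n mat2" where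
  "mat_of_array \<psi> = (\<lambda>(i, j) (k, l). \<psi> i j (k, l))"

end

theory Submission
  imports Defs
begin

lemma sum_pair: "(\<Sum>m\<in>(UNIV::('a::finite\<times>'b::finite) set). g m) = (\<Sum>c\<in>UNIV. \<Sum>d\<in>UNIV. g (c,d))"
  by (simp add: UNIV_Times_UNIV[symmetric] sum.cartesian_product del: UNIV_Times_UNIV)

lemma cnj_delta: "(cnj x = (if P then 1 else 0)) \<longleftrightarrow> (x = (if P then 1 else 0))"
  by (metis complex_cnj_cnj complex_cnj_one complex_cnj_zero)

definition rowON :: "('n::finite) mat2 \<Rightarrow> bool" where
  "rowON M \<longleftrightarrow> (\<forall>a b. (\<Sum>m\<in>UNIV. M a m * cnj (M b m)) = (if a = b then 1 else 0))"
definition colON :: "('n::finite) mat2 \<Rightarrow> bool" where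
  "colON M \<longleftrightarrow> (\<forall>a b. (\<Sum>m\<in>UNIV. M m a * cnj (M m b)) = (if a = b then 1 else 0))"

lemma unitary2_iff: "unitary2 M \<longleftrightarrow> rowON M \<and> colON M"
proof -
  have "(\<Sum>m\<in>UNIV. cnj (M m a) * M m b) = cnj (\<Sum>m\<in>UNIV. M m a * cnj (M m b))" for a b
    by (simp add: mult.commute)
  then show ?thesis unfolding unitary2_def rowON_def colON_def by (simp only: cnj_delta)
qed




lemma quad: assumes h: "{p,q,r,s} = {0,1,2,3::nat}" "p<q" "r<s"
  shows "(p=0\<and>q=1\<and>r=2) \<or> (p=0\<and>q=2\<and>r=1) \<or> (p=0\<and>q=3\<and>r=1) \<or> (p=1\<and>q=2\<and>r=0) \<or> (p=1\<and>q=3\<and>r=0) \<or> (p=2\<and>q=3\<and>r=0)"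
proof -
  have m: "p \<in> {0,1,2,3}" "q \<in> {0,1,2,3}" "r \<in> {0,1,2,3}" "s \<in> {0,1,2,3}"
    unfolding h(1)[symmetric] by simp_all
  have b: "0 \<in> {p,q,r,s}" "1 \<in> {p,q,r,s}" "2 \<in> {p,q,r,s}" "3 \<in> {p,q,r,s}" unfolding h(1) by simp_all
  then have b': "(0=p \<or> 0=q \<or> 0=r \<or> 0=s)" "(1=p \<or> 1=q \<or> 1=r \<or> 1=s)" "(2=p \<or> 2=q \<or> 2=r \<or> 2=s)" "(3=p \<or> 3=q \<or> 3=r \<or> 3=s)" by simp_all
  from m have "(p=0 \<or> p=1 \<or> p=2 \<or> p=3)" "(q=0 \<or> q=1 \<or> q=2 \<or> q=3)" "(r=0 \<or> r=1 \<or> r=2 \<or> r=3)" "(s=0 \<or> s=1 \<or> s=2 \<or> s=3)" by simp_all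
  then show ?thesis by (elim disjE; use b' h(2,3) in simp)
qed


lemma delta1: "(\<Sum>y\<in>(UNIV::'a::finite set). (v y::'b::comm_ring_1) * (if x = y then 1 else 0)) = v x"
proof -
  have "(\<Sum>y\<in>(UNIV::'a::finite set). (v y::'b::comm_ring_1) * (if x = y then 1 else 0)) = (\<Sum>y\<in>UNIV. if x = y then v y else 0)"
    by (rule sum.cong) auto
  then show ?thesis by (simp add: sum.delta)
qed
lemma delta2: "(\<Sum>y\<in>(UNIV::'a::finite set). (v y::'b::comm_ring_1) * (if y = x then 1 else 0)) = v x"
proof -
  have "(\<Sum>y\<in>(UNIV::'a::finite set). (v y::'b::comm_ring_1) * (if y = x then 1 else 0)) = (\<Sum>y\<in>UNIV. if y = x then v y else 0)"
    by (rule sum.cong) auto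
  then show ?thesis by (simp add: sum.delta')
qed
lemma delta3: "(\<Sum>y\<in>(UNIV::'a::finite set). (if y = x then 1 else 0) * (v y::'b::comm_ring_1)) = v x"
  using delta2[of v x] by (simp add: mult.commute)

definition G :: "('n::finite \<Rightarrow> 'n \<Rightarrow> 'n \<Rightarrow> 'n \<Rightarrow> complex) \<Rightarrow> 'n \<Rightarrow> 'n \<Rightarrow> 'n \<Rightarrow> 'n \<Rightarrow> complex" where
  "G F a b a2 b2 = (\<Sum>c\<in>UNIV. \<Sum>d\<in>UNIV. F a b c d * cnj (F a2 b2 c d))"

definition Q :: "('n::finite \<Rightarrow> 'n \<Rightarrow> 'n \<Rightarrow> 'n \<Rightarrow> complex) \<Rightarrow> bool" where
  "Q F \<longleftrightarrow> (\<forall>a b a2 b2. G F a b a2 b2 = (if a = a2 \<and> b = b2 then 1 else 0))"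

lemma Qalt: "Q F \<longleftrightarrow> (\<forall>j k y y'. G F j y k y' = (if j = k \<and> y = y' then 1 else 0))"
  unfolding Q_def
  apply (rule iffI)
   apply (intro allI)
   apply (erule allE)+
   apply assumption
  apply (intro allI)
  apply (erule allE)+
  apply assumption
  done

lemma Q_swapcd: "Q F \<longleftrightarrow> Q (\<lambda>a b c d. F a b d c)"
  unfolding Q_def G_def by (subst sum.swap) (rule refl)

lemma Q_swap1: "Q F \<Longrightarrow> Q (\<lambda>a b c d. F b a c d)"
  unfolding Q_def
proof (intro allI)
  fix a b a2 b2
  assume H: "\<forall>a b a2 b2. G F a b a2 b2 = (if a = a2 \<and> b = b2 then 1 else 0)"
  have 1: "G F b a b2 a2 = (if b = b2 \<and> a = a2 then 1 else 0)"
    by (rule H[rule_format, of b a b2 a2])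
  have 2: "G (\<lambda>a b c d. F b a c d) a b a2 b2 = G F b a b2 a2"
    unfolding G_def by (rule refl)
  have 3: "(b = b2 \<and> a = a2) = (a = a2 \<and> b = b2)" by (rule conj_commute)
  show "G (\<lambda>a b c d. F b a c d) a b a2 b2 = (if a = a2 \<and> b = b2 then 1 else 0)"
    unfolding 2 1 3 by (rule refl)
qed

lemma Q_swapab: "Q F \<longleftrightarrow> Q (\<lambda>a b c d. F b a c d)"
proof
  assume "Q F" then show "Q (\<lambda>a b c d. F b a c d)" by (rule Q_swap1)
next
  assume "Q (\<lambda>a b c d. F b a c d)"
  from Q_swap1[OF this] show "Q F" by simp
qed

lemma rowON_Q: "rowON M \<longleftrightarrow> Q (\<lambda>a b c d. M (a,b) (c,d))"
  unfolding rowON_def Q_def G_def by (simp add: sum_pair split_paired_All prod_eq_iff)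

lemma colON_Q: "colON M \<longleftrightarrow> Q (\<lambda>a b c d. M (c,d) (a,b))"
  unfolding colON_def Q_def G_def by (simp add: sum_pair split_paired_All prod_eq_iff)

lemma mu: "multiunitary U \<longleftrightarrow>
   Q (\<lambda>a b c d. U (a,b) (c,d)) \<and> Q (\<lambda>a b c d. U (c,d) (a,b)) \<and>
   Q (\<lambda>a b c d. U (a,c) (b,d)) \<and> Q (\<lambda>a b c d. U (c,a) (d,b)) \<and>
   Q (\<lambda>a b c d. U (a,c) (d,b)) \<and> Q (\<lambda>a b c d. U (c,a) (b,d))"
proof -
  have 1: "rowON (partial_transpose U) \<longleftrightarrow> Q (\<lambda>a b c d. U (a,c) (d,b))"
    unfolding rowON_Q partial_transpose_def by (subst Q_swapcd) simp
  have 2: "colON (partial_transpose U) \<longleftrightarrow> Q (\<lambda>a b c d. U (c,a) (b,d))"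
    unfolding colON_Q partial_transpose_def by (subst Q_swapab) simp
  show ?thesis unfolding multiunitary_def unitary2_iff 1 2
    by (simp add: rowON_Q colON_Q reshuffle_def)
qed

lemma G_div: "G (\<lambda>a b c d. F a b c d / (x::complex)) a b a2 b2 = G F a b a2 b2 / (x * cnj x)"
  unfolding G_def by (simp add: sum_divide_distrib)

lemma Q_div: fixes F :: "'n::finite \<Rightarrow> 'n \<Rightarrow> 'n \<Rightarrow> 'n \<Rightarrow> complex"
  shows "(\<forall>a b a2 b2. G (\<lambda>a b c d. F a b c d / of_nat CARD('n)) a b a2 b2 =
        (if a = a2 \<and> b = b2 then 1 / (of_nat CARD('n))^2 else 0)) \<longleftrightarrow> Q F"
proof -
  have n: "(of_nat CARD('n)::complex) \<noteq> 0" by simp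
  have "G (\<lambda>a b c d. F a b c d / of_nat CARD('n)) a b a2 b2 =
        (if a = a2 \<and> b = b2 then 1 / (of_nat CARD('n))^2 else 0) \<longleftrightarrow>
        G F a b a2 b2 = (if a = a2 \<and> b = b2 then 1 else 0)" for a b a2 b2
    using n by (simp add: G_div power2_eq_square divide_eq_eq)
  then show ?thesis unfolding Q_def by simp
qed


lemma fills:
  "fill4 0 1 2 a b c d = (a,b,c,d)"
  "fill4 2 3 0 a b c d = (c,d,a,b)"
  "fill4 0 2 1 a b c d = (a,c,b,d)"
  "fill4 1 3 0 a b c d = (c,a,d,b)"
  "fill4 0 3 1 a b c d = (a,c,d,b)"
  "fill4 1 2 0 a b c d = (c,a,b,d)"
  by (simp_all add: fill4_def Let_def)
lemma red:
  fixes U :: "('n::finite) mat2"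
  defines "N \<equiv> of_nat CARD('n) :: complex"
  shows
  "reduced_pair (state_of U) 0 1 2 a b a2 b2 = G (\<lambda>a b c d. U (a,b) (c,d) / N) a b a2 b2"
  "reduced_pair (state_of U) 2 3 0 a b a2 b2 = G (\<lambda>a b c d. U (c,d) (a,b) / N) a b a2 b2"
  "reduced_pair (state_of U) 0 2 1 a b a2 b2 = G (\<lambda>a b c d. U (a,c) (b,d) / N) a b a2 b2"
  "reduced_pair (state_of U) 1 3 0 a b a2 b2 = G (\<lambda>a b c d. U (c,a) (d,b) / N) a b a2 b2"
  "reduced_pair (state_of U) 0 3 1 a b a2 b2 = G (\<lambda>a b c d. U (a,c) (d,b) / N) a b a2 b2"
  "reduced_pair (state_of U) 1 2 0 a b a2 b2 = G (\<lambda>a b c d. U (c,a) (b,d) / N) a b a2 b2"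
  unfolding reduced_pair_def G_def fills state_of_def N_def by simp_all

lemma ame: fixes U :: "('n::finite) mat2" shows "AME4 (state_of U) \<longleftrightarrow>
   Q (\<lambda>a b c d. U (a,b) (c,d)) \<and> Q (\<lambda>a b c d. U (c,d) (a,b)) \<and>
   Q (\<lambda>a b c d. U (a,c) (b,d)) \<and> Q (\<lambda>a b c d. U (c,a) (d,b)) \<and>
   Q (\<lambda>a b c d. U (a,c) (d,b)) \<and> Q (\<lambda>a b c d. U (c,a) (b,d))"
  (is "_ \<longleftrightarrow> ?R")
proof
  assume A: "AME4 (state_of U)"
  have s1: "{0,1,2,3} = {0,1,2,3::nat}" "{0,2,1,3} = {0,1,2,3::nat}" "{0,3,1,2} = {0,1,2,3::nat}"
    "{1,2,0,3} = {0,1,2,3::nat}" "{1,3,0,2} = {0,1,2,3::nat}" "{2,3,0,1} = {0,1,2,3::nat}" by auto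
  have "\<forall>a b a2 b2. reduced_pair (state_of U) p q r a b a2 b2 =
             (if a = a2 \<and> b = b2 then 1 / (of_nat CARD('n))^2 else 0)"
    if "{p,q,r,s} = {0,1,2,3::nat}" "p < q" "r < s" for p q r s
  proof (intro allI)
    fix a b a2 b2
    show "reduced_pair (state_of U) p q r a b a2 b2 =
             (if a = a2 \<and> b = b2 then 1 / (of_nat CARD('n))^2 else 0)"
      by (rule A[unfolded AME4_def, rule_format, of p q r s]) (intro conjI that)
  qed
  note H = this
  have l: "(0::nat) < 1" "(0::nat) < 2" "(0::nat) < 3" "(1::nat) < 2" "(1::nat) < 3" "(2::nat) < 3" by simp_all
  have "Q (\<lambda>a b c d. U (a,b) (c,d))" using H[OF s1(1) l(1) l(6)] unfolding red Q_div .
  moreover have "Q (\<lambda>a b c d. U (c,d) (a,b))" using H[OF s1(6) l(6) l(1)] unfolding red Q_div .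
  moreover have "Q (\<lambda>a b c d. U (a,c) (b,d))" using H[OF s1(2) l(2) l(5)] unfolding red Q_div .
  moreover have "Q (\<lambda>a b c d. U (c,a) (d,b))" using H[OF s1(5) l(5) l(2)] unfolding red Q_div .
  moreover have "Q (\<lambda>a b c d. U (a,c) (d,b))" using H[OF s1(3) l(3) l(4)] unfolding red Q_div .
  moreover have "Q (\<lambda>a b c d. U (c,a) (b,d))" using H[OF s1(4) l(4) l(3)] unfolding red Q_div .
  ultimately show ?R by blast
next
  assume R: ?R
  show "AME4 (state_of U)" unfolding AME4_def
  proof (intro allI impI)
    fix p q r s :: nat and a b a2 b2
    assume h: "{p, q, r, s} = {0, 1, 2, 3} \<and> p < q \<and> r < s"
    from R have R': "\<forall>a b a2 b2. G (\<lambda>a b c d. U (a,b) (c,d) / of_nat CARD('n)) a b a2 b2 = (if a = a2 \<and> b = b2 then 1 / (of_nat CARD('n))^2 else 0)"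
      "\<forall>a b a2 b2. G (\<lambda>a b c d. U (c,d) (a,b) / of_nat CARD('n)) a b a2 b2 = (if a = a2 \<and> b = b2 then 1 / (of_nat CARD('n))^2 else 0)"
      "\<forall>a b a2 b2. G (\<lambda>a b c d. U (a,c) (b,d) / of_nat CARD('n)) a b a2 b2 = (if a = a2 \<and> b = b2 then 1 / (of_nat CARD('n))^2 else 0)"
      "\<forall>a b a2 b2. G (\<lambda>a b c d. U (c,a) (d,b) / of_nat CARD('n)) a b a2 b2 = (if a = a2 \<and> b = b2 then 1 / (of_nat CARD('n))^2 else 0)"
      "\<forall>a b a2 b2. G (\<lambda>a b c d. U (a,c) (d,b) / of_nat CARD('n)) a b a2 b2 = (if a = a2 \<and> b = b2 then 1 / (of_nat CARD('n))^2 else 0)"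
      "\<forall>a b a2 b2. G (\<lambda>a b c d. U (c,a) (b,d) / of_nat CARD('n)) a b a2 b2 = (if a = a2 \<and> b = b2 then 1 / (of_nat CARD('n))^2 else 0)"
      by (simp_all only: Q_div)
    from quad[OF conjunct1[OF h] conjunct1[OF conjunct2[OF h]] conjunct2[OF conjunct2[OF h]]]
    show "reduced_pair (state_of U) p q r a b a2 b2 = (if a = a2 \<and> b = b2 then 1 / (of_nat CARD('n))^2 else 0)"
    proof (elim disjE conjE)
      assume e: "p = 0" "q = 1" "r = 2"
      show ?thesis unfolding e red using R'(1) by blast
    next
      assume e: "p = 0" "q = 2" "r = 1"
      show ?thesis unfolding e red using R'(3) by blast
    next
      assume e: "p = 0" "q = 3" "r = 1"
      show ?thesis unfolding e red using R'(5) by blast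
    next
      assume e: "p = 1" "q = 2" "r = 0"
      show ?thesis unfolding e red using R'(6) by blast
    next
      assume e: "p = 1" "q = 3" "r = 0"
      show ?thesis unfolding e red using R'(4) by blast
    next
      assume e: "p = 2" "q = 3" "r = 0"
      show ?thesis unfolding e red using R'(2) by blast
    qed
  qed
qed

lemma inner_conj: "inner2 v w = cnj (\<Sum>x\<in>UNIV. v x * cnj (w x))"
  unfolding inner2_def cnj_sum by (rule sum.cong) (simp_all add: mult.commute)

lemma span:
  fixes U :: "('n::finite) mat2"
  assumes r: "rowON U"
  shows "colON U \<longleftrightarrow> (\<forall>v. \<exists>c. v = (\<lambda>x. \<Sum>i\<in>UNIV. \<Sum>j\<in>UNIV. c i j * U (i,j) x))"
proof
  assume c: "colON U"
  show "\<forall>v. \<exists>c. v = (\<lambda>x. \<Sum>i\<in>UNIV. \<Sum>j\<in>UNIV. c i j * U (i,j) x)"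
  proof
    fix v :: "'n vec2"
    let ?c = "\<lambda>i j. \<Sum>y\<in>UNIV. v y * cnj (U (i,j) y)"
    have "(\<Sum>i\<in>UNIV. \<Sum>j\<in>UNIV. ?c i j * U (i,j) x) = v x" for x
    proof -
      have "(\<Sum>i\<in>UNIV. \<Sum>j\<in>UNIV. ?c i j * U (i,j) x) = (\<Sum>m\<in>UNIV. ?c (fst m) (snd m) * U m x)"
        by (simp add: sum_pair)
      also have "\<dots> = (\<Sum>m\<in>UNIV. \<Sum>y\<in>UNIV. v y * (U m x * cnj (U m y)))"
        by (simp add: sum_distrib_right sum_distrib_left mult_ac)
      also have "\<dots> = (\<Sum>y\<in>UNIV. v y * (\<Sum>m\<in>UNIV. U m x * cnj (U m y)))"
        by (subst sum.swap) (simp add: sum_distrib_left)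
      also have "\<dots> = (\<Sum>y\<in>UNIV. v y * (if x = y then 1 else 0))"
      proof -
        have "(\<Sum>m\<in>UNIV. U m x * cnj (U m y)) = (if x = y then 1 else 0)" for y
          using c unfolding colON_def by blast
        then show ?thesis by simp
      qed
      also have "\<dots> = v x" by (rule delta1)
      finally show ?thesis .
    qed
    then show "\<exists>c. v = (\<lambda>x. \<Sum>i\<in>UNIV. \<Sum>j\<in>UNIV. c i j * U (i,j) x)" by (intro exI[of _ ?c]) auto
  qed
next
  assume sp: "\<forall>v. \<exists>c. v = (\<lambda>x. \<Sum>i\<in>UNIV. \<Sum>j\<in>UNIV. c i j * U (i,j) x)"
  show "colON U" unfolding colON_def
  proof (intro allI)
    fix a y :: "'n \<times> 'n"
    obtain c where cv: "(\<lambda>x. if x = y then 1 else 0 :: complex) = (\<lambda>x. \<Sum>i\<in>UNIV. \<Sum>j\<in>UNIV. c i j * U (i,j) x)"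
      using sp by blast
    have cv': "(if x = y then 1 else 0) = (\<Sum>m\<in>UNIV. c (fst m) (snd m) * U m x)" for x
      using fun_cong[OF cv, of x] by (simp add: sum_pair)
    have cb: "c (fst b) (snd b) = cnj (U b y)" for b
    proof -
      have "cnj (U b y) = (\<Sum>x\<in>UNIV. (if x = y then 1 else 0) * cnj (U b x))"
        by (rule delta3[symmetric])
      also have "\<dots> = (\<Sum>x\<in>UNIV. \<Sum>m\<in>UNIV. c (fst m) (snd m) * (U m x * cnj (U b x)))"
        by (simp add: cv' sum_distrib_right sum_distrib_left mult_ac)
      also have "\<dots> = (\<Sum>m\<in>UNIV. c (fst m) (snd m) * (\<Sum>x\<in>UNIV. U m x * cnj (U b x)))"
        by (subst sum.swap) (simp add: sum_distrib_left)
      also have "\<dots> = (\<Sum>m\<in>UNIV. c (fst m) (snd m) * (if m = b then 1 else 0))"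
      proof -
        have "(\<Sum>x\<in>UNIV. U m x * cnj (U b x)) = (if m = b then 1 else 0)" for m
          using r unfolding rowON_def by blast
        then show ?thesis by simp
      qed
      also have "\<dots> = c (fst b) (snd b)" by (rule delta2)
      finally show ?thesis by simp
    qed
    have e: "(\<Sum>m\<in>UNIV. cnj (U m y) * U m a) = (if a = y then 1 else 0)"
      using cv'[of a] by (simp add: cb)
    have "(\<Sum>m\<in>UNIV. U m a * cnj (U m y)) = (\<Sum>m\<in>UNIV. cnj (U m y) * U m a)"
      by (rule sum.cong) (simp_all add: mult.commute)
    then show "(\<Sum>m\<in>UNIV. U m a * cnj (U m y)) = (if a = y then 1 else 0)" using e by simp
  qed
qed


lemma arr: "array_of U i j = U (i,j)"
  by (simp add: array_of_def)

lemma pt: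
  "ptrace1 (array_of U j) (array_of U k) UNIV y y' = G (\<lambda>a b c d. U (a,c) (d,b)) j y k y'"
  "ptrace2 (array_of U j) (array_of U k) UNIV x x' = G (\<lambda>a b c d. U (a,c) (b,d)) j x k x'"
  "ptrace1 (\<lambda>i. array_of U i j) (\<lambda>i. array_of U i k) UNIV y y' = G (\<lambda>a b c d. U (c,a) (d,b)) j y k y'"
  "ptrace2 (\<lambda>i. array_of U i j) (\<lambda>i. array_of U i k) UNIV x x' = G (\<lambda>a b c d. U (c,a) (b,d)) j x k x'"
  by (simp_all add: arr ptrace1_def ptrace2_def G_def)

lemma p1: "(\<forall>i j i' j'. inner2 (array_of U i j) (array_of U i' j') = (if i = i' \<and> j = j' then 1 else 0))
   \<longleftrightarrow> rowON U"
  unfolding rowON_def arr inner_conj cnj_delta by (simp add: split_paired_All prod_eq_iff)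

lemma oqls: fixes U :: "('n::finite) mat2" shows "OQLS (array_of U) \<longleftrightarrow>
   rowON U \<and> colON U \<and>
   Q (\<lambda>a b c d. U (a,c) (b,d)) \<and> Q (\<lambda>a b c d. U (c,a) (d,b)) \<and>
   Q (\<lambda>a b c d. U (a,c) (d,b)) \<and> Q (\<lambda>a b c d. U (c,a) (b,d))"
proof -
  have sp: "(\<forall>v. \<exists>c. v = (\<lambda>x. \<Sum>i\<in>UNIV. \<Sum>j\<in>UNIV. c i j * array_of U i j x)) \<longleftrightarrow>
      (\<forall>v. \<exists>c. v = (\<lambda>x. \<Sum>i\<in>UNIV. \<Sum>j\<in>UNIV. c i j * U (i,j) x))" by (simp add: arr)
  have ac: "(\<forall>j k. (\<forall>y y'. P1 j k y y') \<and> (\<forall>x x'. P2 j k x x')) \<longleftrightarrow>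
     (\<forall>j k y y'. P1 j k y y') \<and> (\<forall>j k x x'. P2 j k x x')" for P1 P2 :: "'n \<Rightarrow> 'n \<Rightarrow> 'n \<Rightarrow> 'n \<Rightarrow> bool"
    by blast
  have sp2: "rowON U \<and> (\<forall>v. \<exists>c. v = (\<lambda>x. \<Sum>i\<in>UNIV. \<Sum>j\<in>UNIV. c i j * U (i,j) x)) \<longleftrightarrow> rowON U \<and> colON U"
  proof (cases "rowON U")
    case True
    show ?thesis unfolding span[OF True] by (rule refl)
  next
    case False
    show ?thesis by (simp only: False simp_thms)
  qed
  show ?thesis unfolding OQLS_def p1 sp pt ac Qalt[symmetric] conj_assoc[symmetric] sp2 by (simp only: conj_ac)
qed

lemma arr_inv: "array_of (mat_of_array \<psi>) = \<psi>"
  by (simp add: array_of_def mat_of_array_def)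

theorem mainTheorem13:
  fixes U :: "('n::finite) mat2"
  shows "(multiunitary U \<longleftrightarrow> AME4 (state_of U))
       \<and> (multiunitary U \<longleftrightarrow> OQLS (array_of U))
       \<and> (multiunitary U \<longrightarrow> OQLS (array_of U))
       \<and> (\<forall>\<psi> :: 'n \<Rightarrow> 'n \<Rightarrow> 'n vec2. OQLS \<psi> \<longrightarrow> multiunitary (mat_of_array \<psi>))"
proof -
  have mo: "multiunitary V \<longleftrightarrow> OQLS (array_of V)" for V :: "'n mat2"
    unfolding mu oqls rowON_Q colON_Q by (rule refl)
  have ma: "multiunitary U \<longleftrightarrow> AME4 (state_of U)"
    unfolding mu ame by (rule refl)
  have mp: "\<forall>\<psi> :: 'n \<Rightarrow> 'n \<Rightarrow> 'n vec2. OQLS \<psi> \<longrightarrow> multiunitary (mat_of_array \<psi>)"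
  proof (intro allI impI)
    fix \<psi> :: "'n \<Rightarrow> 'n \<Rightarrow> 'n vec2"
    assume "OQLS \<psi>"
    then have "OQLS (array_of (mat_of_array \<psi>))" by (simp only: arr_inv)
    then show "multiunitary (mat_of_array \<psi>)" using mo by blast
  qed
  show ?thesis using ma mo[of U] mp by blast
qed

end
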